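(* Let $A$ be a unital ring and $p\in A$ a full idempotent, and suppose $\sum_{i=1}^n a_ipb_i=1$ for some $a_1,\dots,a_n,b_1,\dots,b_n\in A$. Then $\operatorname{sr}(pAp)\le n\cdot\operatorname{sr}(A)-n+1$.
   Context: An idempotent $p$ in a unital ring $A$ is full if $ApA=A$. A row $(a_1,\dots,a_n)\in A^n$ is right unimodular if $\sum_{i=1}^n a_iA=A$. A row $(a_1,\dots,a_n,b)\in A^{n+1}$ is reducible if there exist $c_1,\dots,c_n\in A$ such that $(a_1+bc_1,\dots,a_n+bc_n)$ is right unimodular. The (Bass) stable rank $\operatorname{sr}(A)$ is the least positive integer $n$ such that every right unimodular row in $A^{n+1}$ is reducible, or $\infty$ if no such $n$ exists (with the convention that the inequality is trivial if $\operatorname{sr}(A)=\infty$). *)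

theory Defs
  imports Main "HOL-Library.Extended_Nat"
begin

text \<open>Since the corner ring pAp is not a type, all notions are
relativised to a subring given by a carrier set S with its own unit e.
For the whole ring A take S = UNIV and e = 1.
Rows of length n are functions a :: nat => 'a restricted to indices i < n.\<close>

definition full_idempotent :: "'a::ring_1 \<Rightarrow> bool" where
  "full_idempotent p \<longleftrightarrow> p * p = p \<and>
     (\<forall>x. \<exists>(k::nat) u v. x = (\<Sum>i<k. u i * p * v i))"

definition right_unimodular_on :: "'a::ring_1 set \<Rightarrow> 'a \<Rightarrow> nat \<Rightarrow> (nat \<Rightarrow> 'a) \<Rightarrow> bool" where
  "right_unimodular_on S e n a \<longleftrightarrow>
     (\<exists>x. (\<forall>i<n. x i \<in> S) \<and> (\<Sum>i<n. a i * x i) = e)"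

definition reducible_on :: "'a::ring_1 set \<Rightarrow> 'a \<Rightarrow> nat \<Rightarrow> (nat \<Rightarrow> 'a) \<Rightarrow> 'a \<Rightarrow> bool" where
  "reducible_on S e n a b \<longleftrightarrow>
     (\<exists>c. (\<forall>i<n. c i \<in> S) \<and> right_unimodular_on S e n (\<lambda>i. a i + b * c i))"

definition sr_le :: "'a::ring_1 set \<Rightarrow> 'a \<Rightarrow> nat \<Rightarrow> bool" where
  "sr_le S e n \<longleftrightarrow>
     (\<forall>a b. (\<forall>i<n. a i \<in> S) \<and> b \<in> S \<and> right_unimodular_on S e (Suc n) (a(n := b))
        \<longrightarrow> reducible_on S e n a b)"

definition stable_rank_on :: "'a::ring_1 set \<Rightarrow> 'a \<Rightarrow> enat" where
  "stable_rank_on S e =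
     (if \<exists>n>0. sr_le S e n then enat (LEAST n. n > 0 \<and> sr_le S e n) else \<infinity>)"

definition stable_rank :: "'a::ring_1 itself \<Rightarrow> enat" where
  "stable_rank _ = stable_rank_on (UNIV :: 'a set) 1"

definition corner :: "'a::ring_1 \<Rightarrow> 'a set" where
  "corner p = {p * x * p | x. True}"

end

theory Submission
  imports Defs
begin

lemma corner_iff:
  fixes p :: "'a::ring_1"
  assumes pp: "p * p = p"
  shows "z \<in> corner p \<longleftrightarrow> p * z = z \<and> z * p = z"
proof
  assume "z \<in> corner p"
  then obtain x where z: "z = p * x * p" by (auto simp: corner_def)
  show "p * z = z \<and> z * p = z"
    unfolding z by (metis mult.assoc pp)
next
  assume "p * z = z \<and> z * p = z"
  then have "z = p * z * p" by simp
  then show "z \<in> corner p" by (auto simp: corner_def)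
qed

lemma sum_split_add: "(\<Sum>i<(a::nat)+b. f i) = (\<Sum>i<a. f i) + (\<Sum>j<b. f (a+j))"
  by (induction b) (simp_all add: add.assoc)

lemma sum_split_mult: "(\<Sum>i<(n::nat)*M. f i) = (\<Sum>k<M. \<Sum>j<n. f (k*n+j))"
proof (induction M)
  case 0 then show ?case by simp
next
  case (Suc M)
  have "n * Suc M = n * M + n" by simp
  then have "(\<Sum>i<n*Suc M. f i) = (\<Sum>i<n*M. f i) + (\<Sum>j<n. f (n*M+j))"
    by (simp only: sum_split_add)
  then show ?case using Suc by (simp add: mult.commute)
qed

lemma idx_lt:
  fixes k j n M :: nat
  assumes "k < M" "j < n"
  shows "k*n+j < n*M"
proof -
  have "Suc k * n \<le> M * n" using assms(1) by (intro mult_le_mono1) simp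
  then show ?thesis using assms(2) by (simp add: mult.commute)
qed

lemma sr_from:
  assumes "stable_rank TYPE('a::ring_1) = enat m"
  shows "0 < m \<and> sr_le (UNIV::'a set) 1 m"
proof -
  have ex: "\<exists>n>0. sr_le (UNIV::'a set) 1 n"
    using assms unfolding stable_rank_def stable_rank_on_def by (auto split: if_splits)
  then have m: "m = (LEAST n. n > 0 \<and> sr_le (UNIV::'a set) 1 n)"
    using assms unfolding stable_rank_def stable_rank_on_def by auto
  show ?thesis unfolding m using ex by (metis (mono_tags, lifting) LeastI)
qed

lemma sr_bound:
  assumes "0 < N" "sr_le S e N"
  shows "stable_rank_on S e \<le> enat N"
proof -
  have "(LEAST n. n > 0 \<and> sr_le S e n) \<le> N" using assms by (intro Least_le) simp
  then show ?thesis using assms unfolding stable_rank_on_def by auto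
qed

lemma core:
  fixes p :: "'a::ring_1" and a b :: "nat \<Rightarrow> 'a"
  assumes pp: "p * p = p" and sum1: "(\<Sum>i<n. a i * p * b i) = 1"
    and srA: "sr_le (UNIV::'a set) 1 m" and m0: "0 < m"
  shows "sr_le (corner p) p (n*(m-1)+1)"
proof -
  define M where "M = m - 1"
  define L where "L = n * M"
  have mM: "m = Suc M" using m0 M_def by simp
  have NL: "n*(m-1)+1 = Suc L" by (simp add: L_def M_def)
  have cI: "\<And>z. z \<in> corner p \<longleftrightarrow> p * z = z \<and> z * p = z" using corner_iff[OF pp] .
  show ?thesis unfolding NL sr_le_def
  proof (intro allI impI)
    fix X :: "nat \<Rightarrow> 'a" and Y
    assume H: "(\<forall>i<Suc L. X i \<in> corner p) \<and> Y \<in> corner p \<and>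
      right_unimodular_on (corner p) p (Suc (Suc L)) (X(Suc L := Y))"
    have Xp: "\<And>i. i < Suc L \<Longrightarrow> p * X i = X i \<and> X i * p = X i" using H cI by blast
    have Yp: "p * Y = Y \<and> Y * p = Y" using H cI by blast
    obtain r where rC: "\<forall>i<Suc (Suc L). r i \<in> corner p"
      and rs: "(\<Sum>i<Suc (Suc L). (X(Suc L := Y)) i * r i) = p"
      using H unfolding right_unimodular_on_def by blast
    have rp: "\<And>i. i < Suc (Suc L) \<Longrightarrow> p * r i = r i \<and> r i * p = r i" using rC cI by blast
    define s where "s = r (Suc L)"
    have sp: "p * s = s \<and> s * p = s" using rp s_def by simp
    have "(\<Sum>i<Suc L. (X(Suc L := Y)) i * r i) = (\<Sum>i<Suc L. X i * r i)"
      by (rule sum.cong) auto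
    then have eq0: "(\<Sum>i<L. X i * r i) + X L * r L + Y * s = p"
      using rs by (simp add: s_def)
    define f where "f = 1 - p"
    have fp: "f * p = 0" "p * f = 0" "f * f = f" using pp by (simp_all add: f_def algebra_simps)
    define t where "t k = (if k < M then (\<Sum>j<n. a j * r (k*n+j)) else r L + f)" for k
    define q where "q k j = r (k*n+j) - p * b j * t k" for k j
    define u where "u k = (if k < M then (\<Sum>j<n. X (k*n+j) * b j) else X L + f)" for k
    define v where "v = Y * s + (\<Sum>k<M. \<Sum>j<n. X (k*n+j) * q k j)"
    have idx: "\<And>k j. k < M \<Longrightarrow> j < n \<Longrightarrow> k*n+j < L" unfolding L_def by (rule idx_lt)
    have Xg: "p * X (k*n+j) = X (k*n+j)" "X (k*n+j) * p = X (k*n+j)"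
      if "k < M" "j < n" for k j using Xp idx[OF that] by auto
    have grp: "u k * t k + (\<Sum>j<n. X (k*n+j) * q k j) = (\<Sum>j<n. X (k*n+j) * r (k*n+j))"
      if k: "k < M" for k
    proof -
      have "u k * t k = (\<Sum>j<n. X (k*n+j) * b j * t k)"
        using k by (simp add: u_def sum_distrib_right)
      moreover have "X (k*n+j) * b j * t k + X (k*n+j) * q k j = X (k*n+j) * r (k*n+j)"
        if j: "j < n" for j
      proof -
        have "X (k*n+j) * (p * b j * t k) = X (k*n+j) * b j * t k"
          using Xp[of "k*n+j"] idx[OF k j] by (metis less_SucI mult.assoc)
        then show ?thesis by (simp add: q_def right_diff_distrib)
      qed
      ultimately show ?thesis by (simp add: sum.distrib[symmetric])
    qed
    have last: "u M * t M = X L * r L + f"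
    proof -
      have "X L * f = 0" using Xp[of L] by (simp add: f_def right_diff_distrib)
      moreover have "f * r L = 0" using rp[of L] by (simp add: f_def left_diff_distrib)
      ultimately show ?thesis using fp by (simp add: u_def t_def algebra_simps)
    qed
    have unimod1: "(\<Sum>k<m. u k * t k) + v = 1"
    proof -
      have "(\<Sum>k<M. u k * t k) + (\<Sum>k<M. \<Sum>j<n. X (k*n+j) * q k j) = (\<Sum>i<L. X i * r i)"
        by (simp add: sum.distrib[symmetric] grp L_def sum_split_mult)
      then have "(\<Sum>k<m. u k * t k) + v = (\<Sum>i<L. X i * r i) + u M * t M + Y * s"
        unfolding mM v_def by (simp add: algebra_simps)
      also have "\<dots> = ((\<Sum>i<L. X i * r i) + X L * r L + Y * s) + f"
        using last by (simp add: algebra_simps)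
      also have "\<dots> = 1" using eq0 by (simp add: f_def)
      finally show ?thesis .
    qed
    have "right_unimodular_on UNIV 1 (Suc m) (u(m := v))"
    proof -
      have "(\<Sum>i<Suc m. (u(m := v)) i * (t(m := 1)) i) = (\<Sum>k<m. u k * t k) + v"
      proof -
        have "(\<Sum>i<m. (u(m := v)) i * (t(m := 1)) i) = (\<Sum>k<m. u k * t k)"
          by (rule sum.cong) auto
        then show ?thesis by simp
      qed
      then show ?thesis unfolding right_unimodular_on_def using unimod1 by (intro exI[of _ "t(m := 1)"]) simp
    qed
    then have "reducible_on UNIV 1 m u v" using srA unfolding sr_le_def by blast
    then obtain c z' where cz: "(\<Sum>k<m. (u k + v * c k) * z' k) = 1"
      unfolding reducible_on_def right_unimodular_on_def by blast
    define zz where "zz k = z' k * p" for k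
    have E1: "(\<Sum>k<m. (u k + v * c k) * zz k) = p"
    proof -
      have "(\<Sum>k<m. (u k + v * c k) * zz k) = (\<Sum>k<m. (u k + v * c k) * z' k) * p"
        by (simp add: zz_def sum_distrib_right mult.assoc)
      then show ?thesis using cz by simp
    qed
    have qp: "p * q k j = q k j" if "k*n+j < Suc (Suc L)" for k j
      using rp[OF that] pp by (simp add: q_def right_diff_distrib mult.assoc[symmetric])
    have pu: "p * u k = u k" "f * u k = 0" if k: "k < M" for k
    proof -
      have "p * u k = (\<Sum>j<n. p * X (k*n+j) * b j)"
        using k by (simp add: u_def sum_distrib_left mult.assoc)
      also have "\<dots> = u k" using k Xg by (simp add: u_def)
      finally show "p * u k = u k" .
      then show "f * u k = 0" by (simp add: f_def left_diff_distrib)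
    qed
    have puM: "p * u M = X L" "f * u M = f"
      using Xp[of L] fp by (simp_all add: u_def distrib_left f_def left_diff_distrib)
    have pv: "p * v = v"
    proof -
      have "p * (\<Sum>k<M. \<Sum>j<n. X (k*n+j) * q k j) = (\<Sum>k<M. \<Sum>j<n. p * X (k*n+j) * q k j)"
        by (simp add: sum_distrib_left mult.assoc)
      also have "\<dots> = (\<Sum>k<M. \<Sum>j<n. X (k*n+j) * q k j)"
        using Xg by simp
      finally show ?thesis using Yp by (simp add: v_def distrib_left mult.assoc[symmetric])
    qed
    then have fv: "f * v = 0" by (simp add: f_def left_diff_distrib)
    have fzM: "f * zz M = 0"
    proof -
      have "f * p = f * (\<Sum>k<m. (u k + v * c k) * zz k)" using E1 by simp
      also have "\<dots> = (\<Sum>k<m. f * (u k + v * c k) * zz k)"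
        by (simp add: sum_distrib_left mult.assoc)
      also have "\<dots> = (\<Sum>k<M. 0) + f * zz M"
        unfolding mM using pu(2) puM(2) fv by (simp add: distrib_left mult.assoc[symmetric])
      finally show ?thesis using fp by simp
    qed
    then have pzM: "p * zz M = zz M" by (simp add: f_def left_diff_distrib)
    define W where "W = (\<Sum>k<m. c k * zz k)"
    have zzp: "zz k * p = zz k" for k using pp by (simp add: zz_def mult.assoc)
    have Wp: "W * p = W" by (simp add: W_def sum_distrib_right mult.assoc zzp)
    have pp2: "p * (p * x) = p * x" for x by (metis mult.assoc pp)
    define C where "C i = (if i < L then s * c (i div n) * a (i mod n) * p else s * c M * p)" for i
    define Z where "Z i = (if i < L then p * b (i mod n) * zz (i div n) + q (i div n) (i mod n) * W
                           else p * zz M)" for i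
    have dm: "(k*n+j) div n = k" "(k*n+j) mod n = j" if "j < n" for k j
      using that by simp_all
    have CC: "\<forall>i<Suc L. C i \<in> corner p"
    proof (intro allI impI)
      fix i assume "i < Suc L"
      have "p * C i = C i" using sp by (simp add: C_def mult.assoc[symmetric])
      moreover have "C i * p = C i" using pp by (simp add: C_def mult.assoc)
      ultimately show "C i \<in> corner p" using cI by blast
    qed
    have ZC: "\<forall>i<Suc L. Z i \<in> corner p"
    proof (intro allI impI)
      fix i assume i: "i < Suc L"
      have "p * Z i = Z i"
      proof (cases "i < L")
        case True
        have "p * q (i div n) (i mod n) = q (i div n) (i mod n)"
          using i by (intro qp) simp
        then show ?thesis using True
          by (simp add: Z_def distrib_left mult.assoc[symmetric] pp)
      next
        case False then show ?thesis by (simp add: Z_def pp2)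
      qed
      moreover have "Z i * p = Z i"
        by (simp add: Z_def distrib_right mult.assoc zzp Wp)
      ultimately show "Z i \<in> corner p" using cI by blast
    qed
    have qa: "(\<Sum>j<n. a j * p * q k j) = 0" if k: "k < M" for k
    proof -
      have "a j * p * q k j = a j * r (k*n+j) - a j * p * b j * t k" if j: "j < n" for j
      proof -
        have "p * r (k*n+j) = r (k*n+j)" using rp idx[OF k j] by simp
        then show ?thesis
          by (simp add: q_def right_diff_distrib mult.assoc pp2)
      qed
      then have "(\<Sum>j<n. a j * p * q k j) = (\<Sum>j<n. a j * r (k*n+j)) - (\<Sum>j<n. a j * p * b j) * t k"
        by (simp add: sum_subtractf sum_distrib_right)
      also have "\<dots> = 0" using k by (simp add: sum1 t_def)
      finally show ?thesis .
    qed
    have grp2: "(\<Sum>j<n. (X (k*n+j) + Y * (s * c k * a j * p)) * (p * b j * zz k + q k j * W))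
        = u k * zz k + (\<Sum>j<n. X (k*n+j) * q k j) * W + Y * s * c k * zz k" if k: "k < M" for k
    proof -
      have "(X (k*n+j) + Y * (s * c k * a j * p)) * (p * b j * zz k + q k j * W)
          = X (k*n+j) * b j * zz k + X (k*n+j) * q k j * W + Y * s * c k * (a j * p * b j) * zz k
            + Y * s * c k * (a j * p * q k j) * W" if j: "j < n" for j
      proof -
        have X1: "X (k*n+j) * (p * x) = X (k*n+j) * x" for x
          using Xg(2)[OF k j] by (metis mult.assoc)
        have X2: "X (j+k*n) * (p * x) = X (j+k*n) * x" for x
          using X1 by (simp add: add.commute)
        show ?thesis by (simp add: algebra_simps X1 X2 pp2)
      qed
      then have "(\<Sum>j<n. (X (k*n+j) + Y * (s * c k * a j * p)) * (p * b j * zz k + q k j * W))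
        = (\<Sum>j<n. X (k*n+j) * b j) * zz k + (\<Sum>j<n. X (k*n+j) * q k j) * W
          + Y * s * c k * (\<Sum>j<n. a j * p * b j) * zz k + Y * s * c k * (\<Sum>j<n. a j * p * q k j) * W"
        by (simp add: sum.distrib sum_distrib_left sum_distrib_right)
      then show ?thesis using k by (simp add: qa sum1 u_def)
    qed
    define G where "G = (\<Sum>k<M. \<Sum>j<n. X (k*n+j) * q k j)"
    define S1 where "S1 = (\<Sum>k<M. u k * zz k)"
    have YW: "Y * s * W = (\<Sum>k<m. Y * s * c k * zz k)"
      by (simp add: W_def sum_distrib_left mult.assoc)
    have vW: "v * W = (\<Sum>k<m. v * c k * zz k)"
      by (simp add: W_def sum_distrib_left mult.assoc)
    have LHS: "(\<Sum>i<Suc L. (X i + Y * C i) * Z i) = S1 + G * W + Y * s * W + X L * zz M"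
    proof -
      have "(\<Sum>i<L. (X i + Y * C i) * Z i) = (\<Sum>k<M. \<Sum>j<n. (X (k*n+j) + Y * C (k*n+j)) * Z (k*n+j))"
        unfolding L_def by (rule sum_split_mult)
      also have "\<dots> = (\<Sum>k<M. \<Sum>j<n. (X (k*n+j) + Y * (s * c k * a j * p)) * (p * b j * zz k + q k j * W))"
        using idx dm by (intro sum.cong refl) (simp add: C_def Z_def)
      also have "\<dots> = (\<Sum>k<M. u k * zz k + (\<Sum>j<n. X (k*n+j) * q k j) * W + Y * s * c k * zz k)"
        using grp2 by (intro sum.cong refl) simp
      also have "\<dots> = S1 + G * W + (\<Sum>k<M. Y * s * c k * zz k)"
        by (simp add: S1_def G_def sum.distrib sum_distrib_right)
      finally have A: "(\<Sum>i<L. (X i + Y * C i) * Z i) = S1 + G * W + (\<Sum>k<M. Y * s * c k * zz k)" .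
      have B: "(X L + Y * C L) * Z L = X L * zz M + Y * s * c M * zz M"
        using Xp[of L] pzM by (simp add: C_def Z_def algebra_simps pp2)
      show ?thesis using A B YW unfolding mM by (simp add: algebra_simps)
    qed
    have RHS: "p = S1 + G * W + Y * s * W + X L * zz M"
    proof -
      have "p = p * (\<Sum>k<m. (u k + v * c k) * zz k)" using E1 pp by simp
      also have "\<dots> = (\<Sum>k<m. p * u k * zz k + p * v * c k * zz k)"
        by (simp add: sum_distrib_left algebra_simps)
      also have "\<dots> = (\<Sum>k<M. u k * zz k + v * c k * zz k) + (X L * zz M + v * c M * zz M)"
        unfolding mM using pu(1) puM(1) pv by simp
      also have "\<dots> = S1 + v * W + X L * zz M"
        unfolding vW mM by (simp add: S1_def sum.distrib algebra_simps)
      also have "\<dots> = S1 + G * W + Y * s * W + X L * zz M"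
        by (simp add: v_def G_def algebra_simps)
      finally show ?thesis .
    qed
    have "(\<Sum>i<Suc L. (X i + Y * C i) * Z i) = p" using LHS RHS by simp
    then show "reducible_on (corner p) p (Suc L) X Y"
      unfolding reducible_on_def right_unimodular_on_def using CC ZC by blast
  qed
qed

theorem theorem8:
  fixes p :: "'a::ring_1" and n :: nat and a b :: "nat \<Rightarrow> 'a"
  assumes "full_idempotent p"
    and "(\<Sum>i<n. a i * p * b i) = 1"
  shows "\<forall>m. stable_rank TYPE('a) = enat m \<longrightarrow>
           stable_rank_on (corner p) p \<le> enat (n * m - n + 1)"
proof (intro allI impI)
  fix m assume "stable_rank TYPE('a) = enat m"
  then have m: "0 < m" "sr_le (UNIV::'a set) 1 m" using sr_from by blast+
  have pp: "p * p = p" using assms(1) unfolding full_idempotent_def by blast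
  have "sr_le (corner p) p (n*(m-1)+1)" using core[OF pp assms(2) m(2) m(1)] .
  then have "stable_rank_on (corner p) p \<le> enat (n*(m-1)+1)" by (intro sr_bound) simp_all
  moreover have "n * m - n + 1 = n*(m-1)+1" by (simp add: diff_mult_distrib2)
  ultimately show "stable_rank_on (corner p) p \<le> enat (n * m - n + 1)" by simp
qed

end
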